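(* Let $m\ge 1$, $1\le B_1\le m$, $B_2\ge 1$, and for $i\in[m]=\{1,\dots,m\}$ let $g_i:\mathbb{R}^d\to\mathbb{R}^p$ be accessed through a stochastic oracle $g_i(\cdot;\xi)$ satisfying, for all $\mathbf{x},\mathbf{y}\in\mathbb{R}^d$ and each fresh oracle sample $\xi$ (a mini-batch of size $B_2$): $\mathbb{E}[g_i(\mathbf{x};\xi)]=g_i(\mathbf{x})$, $\mathbb{E}\|g_i(\mathbf{x};\xi)-g_i(\mathbf{x})\|^2\le \sigma^2/B_2$, and $\mathbb{E}\|g_i(\mathbf{x};\xi)-g_i(\mathbf{y};\xi)\|^2\le C_g^2\|\mathbf{x}-\mathbf{y}\|^2$; also each $g_i$ is $C_g$-Lipschitz. Let $(\mathbf{w}_t)_t$ be a sequence in $\mathbb{R}^d$ such that $\mathbf{w}_t$ and $\mathbf{w}_{t-1}$ are determined by the randomness before iteration $t$. At iteration $t$, a subset $\mathcal{B}_1^t\subseteq[m]$ of size $B_1$ is drawn uniformly at random, and for each $i\in\mathcal{B}_1^t$ a fresh oracle sample $\xi_t^i$ is drawn, independently of everything before. Let $\mathbf{u}_t=(\mathbf{u}_t^1,\dots,\mathbf{u}_t^m)$ be updated by $$\mathbf{u}_t^i=\begin{cases}(1-\beta_t)\mathbf{u}_{t-1}^i+\beta_t g_i(\mathbf{w}_t;\xi_t^i)+\gamma_t\big(g_i(\mathbf{w}_t;\xi_t^i)-g_i(\mathbf{w}_{t-1};\xi_t^i)\big), & i\in\mathcal{B}_1^t,\\ \mathbf{u}_{t-1}^i,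 & i\notin\mathcal{B}_1^t,\end{cases}$$ with $\gamma_t=\frac{m-B_1}{B_1(1-\beta_t)}+(1-\beta_t)$ and $\beta_t\le \frac12$. Then, writing $\|\mathbf{u}_t-g(\mathbf{w}_t)\|^2=\sum_{i=1}^m\|\mathbf{u}_t^i-g_i(\mathbf{w}_t)\|^2$, $$\mathbb{E}\|\mathbf{u}_t-g(\mathbf{w}_t)\|^2\le\Big(1-\frac{B_1\beta_t}{m}\Big)\mathbb{E}\|\mathbf{u}_{t-1}-g(\mathbf{w}_{t-1})\|^2+\frac{2B_1\beta_t^2\sigma^2}{B_2}+\frac{8m^2C_g^2}{B_1}\mathbb{E}\|\mathbf{w}_t-\mathbf{w}_{t-1}\|^2.$$
   Context: This is the Multi-block-Single-probe Variance Reduced (MSVR) estimator, used to track $g(\mathbf{w})=(g_1(\mathbf{w}),\dots,g_m(\mathbf{w}))$ while probing only $B_1$ blocks per iteration. $\mathbf{u}_t^i\in\mathbb{R}^p$. *)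

theory Defs
  imports "HOL-Probability.Probability"
begin

text \<open>MSVR estimator, one iteration. Blocks are indexed by 0..m-1 (i.e. {..<m}).\<close>

definition msvr_gamma :: "nat \<Rightarrow> nat \<Rightarrow> real \<Rightarrow> real" where
  "msvr_gamma m B1 \<beta> = (real m - real B1) / (real B1 * (1 - \<beta>)) + (1 - \<beta>)"

definition msvr_update ::
  "nat \<Rightarrow> nat \<Rightarrow> real \<Rightarrow> (nat \<Rightarrow> 'd \<Rightarrow> 'x \<Rightarrow> 'p::real_vector) \<Rightarrow> 'd \<Rightarrow> 'd
     \<Rightarrow> (nat \<Rightarrow> 'p) \<Rightarrow> nat set \<Rightarrow> (nat \<Rightarrow> 'x) \<Rightarrow> nat \<Rightarrow> 'p" where
  "msvr_update m B1 \<beta> G w_prev w_cur u_prev S \<xi> i =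
     (if i \<in> S then (1 - \<beta>) *\<^sub>R u_prev i + \<beta> *\<^sub>R G i w_cur (\<xi> i)
        + msvr_gamma m B1 \<beta> *\<^sub>R (G i w_cur (\<xi> i) - G i w_prev (\<xi> i))
      else u_prev i)"

definition uniform_subsets :: "nat \<Rightarrow> nat \<Rightarrow> nat set pmf" where
  "uniform_subsets m B1 = pmf_of_set {S. S \<subseteq> {..<m} \<and> card S = B1}"

definition track_err :: "nat \<Rightarrow> (nat \<Rightarrow> 'p::real_normed_vector) \<Rightarrow> (nat \<Rightarrow> 'd \<Rightarrow> 'p) \<Rightarrow> 'd \<Rightarrow> real" where
  "track_err m u g w = (\<Sum>i<m. (norm (u i - g i w))\<^sup>2)"

end

theory Submission
  imports Defs
begin


lemma card_mem_subsets:
  assumes i: "i < m" and k: "1 \<le> k" "k \<le> m"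
  shows "real (card {S \<in> {S. S \<subseteq> {..<m} \<and> card S = k}. i \<in> S})
       = real k / real m * real (card {S. S \<subseteq> {..<m} \<and> card S = k})"
proof -
  have eq: "{S \<in> {S. S \<subseteq> {..<m} \<and> card S = k}. i \<in> S}
     = insert i ` {T. T \<subseteq> {..<m} - {i} \<and> card T = k - 1}"
  proof (intro equalityI subsetI)
    fix S assume S: "S \<in> {S \<in> {S. S \<subseteq> {..<m} \<and> card S = k}. i \<in> S}"
    hence fin: "finite S" by (auto intro: finite_subset)
    have "S = insert i (S - {i})" using S by auto
    moreover have "card (S - {i}) = k - 1" using S fin by (simp add: card_Diff_singleton)
    ultimately show "S \<in> insert i ` {T. T \<subseteq> {..<m} - {i} \<and> card T = k - 1}" using S by blast
  next
    fix S assume "S \<in> insert i ` {T. T \<subseteq> {..<m} - {i} \<and> card T = k - 1}"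
    then obtain T where T: "T \<subseteq> {..<m} - {i}" "card T = k - 1" and S: "S = insert i T" by auto
    have "finite T" using T(1) by (auto intro: finite_subset)
    moreover have "i \<notin> T" using T(1) by auto
    ultimately have "card S = k" using T k S by simp
    thus "S \<in> {S \<in> {S. S \<subseteq> {..<m} \<and> card S = k}. i \<in> S}" using S T i by auto
  qed
  have inj: "inj_on (insert i) {T. T \<subseteq> {..<m} - {i} \<and> card T = k - 1}"
    by (rule inj_onI) blast
  have c1: "card {S \<in> {S. S \<subseteq> {..<m} \<and> card S = k}. i \<in> S} = (m - 1) choose (k - 1)"
    unfolding eq card_image[OF inj] using i by (simp add: n_subsets)
  have c2: "card {S. S \<subseteq> {..<m} \<and> card S = k} = m choose k" by (simp add: n_subsets)
  obtain m' k' where mk: "m = Suc m'" "k = Suc k'" using i k by (metis Suc_pred' less_le_trans not_less zero_less_one gr0_conv_Suc)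
  have "Suc k' * (Suc m' choose Suc k') = Suc m' * (m' choose k')" by (rule Suc_times_binomial)
  hence "real k * real (m choose k) = real m * real ((m-1) choose (k-1))" unfolding mk
    by (metis diff_Suc_1 of_nat_mult)
  thus ?thesis unfolding c1 c2 using i by (simp add: field_simps)
qed

lemma sum_if_subsets:
  assumes i: "i < m" and k: "1 \<le> k" "k \<le> m"
  shows "(\<Sum>S\<in>{S. S \<subseteq> {..<m} \<and> card S = k}. (if i \<in> S then E else c :: real))
        / real (card {S. S \<subseteq> {..<m} \<and> card S = k})
       = real k / real m * E + (1 - real k / real m) * c"
proof -
  let ?A = "{S. S \<subseteq> {..<m} \<and> card S = k}"
  have fin: "finite ?A" by (rule finite_subset[of _ "Pow {..<m}"]) auto
  have pos: "card ?A > 0" using k by (simp add: n_subsets)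
  have "(\<Sum>S\<in>?A. (if i \<in> S then E else c)) = (\<Sum>S\<in>?A. c + (if i \<in> S then E - c else 0))"
    by (rule sum.cong) auto
  also have "\<dots> = real (card ?A) * c + (\<Sum>S\<in>{S \<in> ?A. i \<in> S}. E - c)"
    by (simp add: sum.distrib sum.inter_filter[OF fin, symmetric])
  also have "\<dots> = real (card ?A) * c + real k / real m * real (card ?A) * (E - c)"
    using card_mem_subsets[OF assms] by simp
  finally have eq: "(\<Sum>S\<in>?A. (if i \<in> S then E else c)) = real (card ?A) * c + real k / real m * real (card ?A) * (E - c)" .
  have "real (card ?A) > 0" "real m > 0" using pos i by auto
  have "real (card ?A) * c + real k / real m * real (card ?A) * (E - c)
      = real (card ?A) * (real k / real m * E + (1 - real k / real m) * c)"
  proof -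
    have gen: "\<And>n q::real. n*c + q*n*(E-c) = n*(q*E+(1-q)*c)" by (simp add: algebra_simps)
    show ?thesis by (rule gen)
  qed
  moreover have nz: "real (card ?A) \<noteq> 0" using pos by (metis gr_implies_not0 of_nat_eq_0_iff)
  ultimately show ?thesis unfolding eq by (simp only: nonzero_mult_div_cancel_left[OF nz])
qed


lemma alg:
  fixes p \<beta> \<gamma> bb bD DD L m B1 :: real
  assumes "0 < \<beta>" "\<beta> \<le> 1/2" "1 \<le> B1" "B1 \<le> m"
    and p: "p = B1 / m" and \<gamma>: "\<gamma> = (m - B1) / (B1 * (1 - \<beta>)) + (1 - \<beta>)"
    and "DD \<le> L" "0 \<le> DD" "0 \<le> bb + 2*bD + DD"
  shows "p*((1-\<beta>)^2*bb + 2*\<gamma>*(1-\<beta>)*bD + 2*\<gamma>^2*L) + (1-p)*bb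
         \<le> (1-p*\<beta>)*(bb + 2*bD + DD) + 8*(m/B1)*L"
proof -
  have m0: "m > 0" using assms by linarith
  have cross: "p*(1-\<beta>)*(\<gamma> - (1-\<beta>)) = 1 - p"
  proof -
    have "1 - \<beta> \<noteq> 0" "B1 \<noteq> 0" using assms by auto
    thus ?thesis unfolding p \<gamma> using m0 by (simp add: field_simps)
  qed
  have g1: "\<gamma> \<ge> 1 - \<beta>" using assms by (simp add: \<gamma>)
  have g2: "\<gamma> \<le> 2*(m/B1) - 1"
  proof -
    have "(m - B1) / (B1 * (1 - \<beta>)) \<le> 2*(m-B1)/B1"
    proof -
      have "1/(1-\<beta>) \<le> 2" using assms by (simp add: field_simps)
      moreover have "(m-B1)/B1 \<ge> 0" using assms by simp
      ultimately have "(m-B1)/B1 * (1/(1-\<beta>)) \<le> (m-B1)/B1 * 2" by (rule mult_left_mono)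
      thus ?thesis by (simp add: algebra_simps)
    qed
    hence "\<gamma> \<le> 2*(m-B1)/B1 + 1" using assms unfolding \<gamma> by linarith
    moreover have "2*(m-B1)/B1 + 1 = 2*(m/B1) - 1" using assms by (simp add: field_simps)
    ultimately show ?thesis by linarith
  qed
  have L0: "L \<ge> 0" using assms by linarith
  have pg: "2*p*\<gamma>^2 \<le> 8*(m/B1) - 6"
  proof -
    have "\<gamma>^2 \<le> (2*(m/B1) - 1)^2" using g1 g2 assms by (intro power_mono) auto
    hence "2*p*\<gamma>^2 \<le> 2*p*(2*(m/B1) - 1)^2" using assms m0 by (intro mult_left_mono) auto
    also have "\<dots> = 8*(m/B1) - 8 + 2*(B1/m)" using m0 assms unfolding p by (simp add: field_simps power2_eq_square)
    also have "\<dots> \<le> 8*(m/B1) - 6" using m0 assms by (simp add: field_simps)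
    finally show ?thesis .
  qed
  have LHS: "p*((1-\<beta>)^2*bb + 2*\<gamma>*(1-\<beta>)*bD + 2*\<gamma>^2*L) + (1-p)*bb
     = (p*(1-\<beta>)^2 + 1 - p)*(bb + 2*bD + DD) + (2*p*\<gamma>*(1-\<beta>) - 2*p*(1-\<beta>)^2 - 2*(1-p))*bD
       - (p*(1-\<beta>)^2 + 1 - p)*DD + 2*p*\<gamma>^2*L"
    by (simp add: algebra_simps power2_eq_square)
  have z: "2*p*\<gamma>*(1-\<beta>) - 2*p*(1-\<beta>)^2 - 2*(1-p) = 0" using cross by (simp add: algebra_simps power2_eq_square)
  have c1: "p*(1-\<beta>)^2 + 1 - p \<le> 1 - p*\<beta>"
  proof -
    have "p \<ge> 0" using assms m0 by simp
    moreover have "(1-\<beta>)^2 \<le> 1 - \<beta>" using assms by (simp add: power2_eq_square algebra_simps) 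
    ultimately have "p*(1-\<beta>)^2 \<le> p*(1-\<beta>)" by (rule mult_left_mono[rotated])
    thus ?thesis by (simp add: algebra_simps)
  qed
  have c2: "p*(1-\<beta>)^2 + 1 - p \<ge> 0"
  proof -
    have "p \<le> 1" using assms m0 by simp
    moreover have "p \<ge> 0" using assms m0 by simp
    moreover have "0 \<le> p*(1-\<beta>)^2" using \<open>p \<ge> 0\<close> by simp
    ultimately show ?thesis by linarith
  qed
  have "(p*(1-\<beta>)^2 + 1 - p)*(bb + 2*bD + DD) \<le> (1 - p*\<beta>)*(bb + 2*bD + DD)"
    using c1 assms by (intro mult_right_mono) auto
  moreover have "0 \<le> (p*(1-\<beta>)^2 + 1 - p)*DD" using c2 assms(8) by (rule mult_nonneg_nonneg)
  moreover have "2*p*\<gamma>^2*L \<le> (8*(m/B1) - 6)*L" using pg L0 by (intro mult_right_mono) auto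
  ultimately show ?thesis unfolding LHS z using L0 by (simp add: algebra_simps) 
qed

lemma norm_add_sq: fixes x y :: "'a::real_inner"
  shows "(norm (x+y))\<^sup>2 = (norm x)\<^sup>2 + 2*(x \<bullet> y) + (norm y)\<^sup>2"
  unfolding power2_norm_eq_inner by (simp add: inner_add_left inner_add_right inner_commute[of y x])

lemma sq_tri: fixes a b :: "'a::real_normed_vector"
  shows "(norm (a + b))\<^sup>2 \<le> 2*(norm a)\<^sup>2 + 2*(norm b)\<^sup>2"
proof -
  have "norm (a+b) \<le> norm a + norm b" by (rule norm_triangle_ineq)
  hence "(norm (a+b))\<^sup>2 \<le> (norm a + norm b)\<^sup>2" by (intro power_mono) auto
  also have "\<dots> \<le> 2*(norm a)\<^sup>2 + 2*(norm b)\<^sup>2"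
  proof -
    have "0 \<le> (norm a - norm b)\<^sup>2" by simp
    thus ?thesis unfolding power2_diff power2_sum by linarith
  qed
  finally show ?thesis .
qed

locale msvr_setting =
  fixes D :: "'x measure"
    and G :: "nat \<Rightarrow> 'd::euclidean_space \<Rightarrow> 'x \<Rightarrow> 'p::euclidean_space"
    and g :: "nat \<Rightarrow> 'd \<Rightarrow> 'p"
    and m B1 B2 :: nat and \<sigma> Cg \<beta> :: real
  assumes m1: "m \<ge> 1" and B1: "1 \<le> B1" and B1m: "B1 \<le> m" and B2: "B2 \<ge> 1"
    and D: "prob_space D"
    and G_meas: "\<And>i. i < m \<Longrightarrow> (\<lambda>(x, \<xi>). G i x \<xi>) \<in> borel_measurable (borel \<Otimes>\<^sub>M D)"
    and G_int: "\<And>i x. i < m \<Longrightarrow> integrable D (G i x)"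
    and G_unbiased: "\<And>i x. i < m \<Longrightarrow> (\<integral>\<xi>. G i x \<xi> \<partial>D) = g i x"
    and G_var_int: "\<And>i x. i < m \<Longrightarrow> integrable D (\<lambda>\<xi>. (norm (G i x \<xi> - g i x))\<^sup>2)"
    and G_var: "\<And>i x. i < m \<Longrightarrow> (\<integral>\<xi>. (norm (G i x \<xi> - g i x))\<^sup>2 \<partial>D) \<le> \<sigma>\<^sup>2 / real B2"
    and G_lip_int: "\<And>i x y. i < m \<Longrightarrow> integrable D (\<lambda>\<xi>. (norm (G i x \<xi> - G i y \<xi>))\<^sup>2)"
    and G_lip: "\<And>i x y. i < m \<Longrightarrow>
       (\<integral>\<xi>. (norm (G i x \<xi> - G i y \<xi>))\<^sup>2 \<partial>D) \<le> Cg\<^sup>2 * (norm (x - y))\<^sup>2"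
    and g_lip: "\<And>i. i < m \<Longrightarrow> Cg-lipschitz_on UNIV (g i)"
    and beta0: "0 < \<beta>" and beta1: "\<beta> \<le> 1 / 2"
begin

lemma Gm:
  assumes "i < m" "f \<in> N \<rightarrow>\<^sub>M borel" "h \<in> N \<rightarrow>\<^sub>M D"
  shows "(\<lambda>x. G i (f x) (h x)) \<in> borel_measurable N"
proof -
  have "(\<lambda>x. (f x, h x)) \<in> N \<rightarrow>\<^sub>M borel \<Otimes>\<^sub>M D" using assms by measurable
  from measurable_compose[OF this G_meas[OF assms(1)]] show ?thesis by simp
qed

lemma gm: assumes "i < m" "f \<in> N \<rightarrow>\<^sub>M borel" shows "(\<lambda>x. g i (f x)) \<in> borel_measurable N"
  using borel_measurable_continuous_on[OF lipschitz_on_continuous_on[OF g_lip[OF assms(1)]] assms(2)] .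

lemma g_bound: assumes "i < m" shows "(norm (g i x - g i y))\<^sup>2 \<le> Cg\<^sup>2 * (norm (x - y))\<^sup>2"
proof -
  have "norm (g i x - g i y) \<le> Cg * norm (x - y)" and "0 \<le> Cg"
    using g_lip[OF assms] unfolding lipschitz_on_def dist_norm by auto
  hence "(norm (g i x - g i y))\<^sup>2 \<le> (Cg * norm (x - y))\<^sup>2" by (intro power_mono) auto
  thus ?thesis by (simp add: power_mult_distrib)
qed

definition Afun where
  "Afun i wp wc u x = (1 - \<beta>) *\<^sub>R u + \<beta> *\<^sub>R G i wc x
        + msvr_gamma m B1 \<beta> *\<^sub>R (G i wc x - G i wp x) - g i wc"

lemma per_i:
  assumes i: "i < m"
  shows "integrable D (\<lambda>x. (norm (Afun i wp wc u x))\<^sup>2)"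
    and "real B1 / real m * (\<integral>x. (norm (Afun i wp wc u x))\<^sup>2 \<partial>D)
          + (1 - real B1 / real m) * (norm (u - g i wc))\<^sup>2
        \<le> (1 - real B1 * \<beta> / real m) * (norm (u - g i wp))\<^sup>2
          + 2 * real B1 / real m * \<beta>\<^sup>2 * \<sigma>\<^sup>2 / real B2
          + 8 * (real m / real B1) * Cg\<^sup>2 * (norm (wc - wp))\<^sup>2"
proof -
  interpret D: prob_space D by (rule D)
  define \<gamma> where "\<gamma> = msvr_gamma m B1 \<beta>"
  define V where "V = (1 - \<beta>) *\<^sub>R (u - g i wc)"
  define X where "X = (\<lambda>x. G i wc x - g i wc)"
  define Y where "Y = (\<lambda>x. G i wc x - G i wp x)"
  define \<Delta> where "\<Delta> = g i wc - g i wp"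
  define W where "W = (\<lambda>x. \<beta> *\<^sub>R X x + \<gamma> *\<^sub>R Y x)"
  have AVW: "Afun i wp wc u x = V + W x" for x
    unfolding Afun_def V_def W_def X_def Y_def \<gamma>_def by (simp add: algebra_simps)
  have Gmx: "G i w \<in> borel_measurable D" for w
    using Gm[OF i, of "\<lambda>_. w" D "\<lambda>x. x"] by simp
  have Xm: "X \<in> borel_measurable D" and Ym: "Y \<in> borel_measurable D"
    unfolding X_def Y_def using Gmx by auto
  have Wm: "W \<in> borel_measurable D" unfolding W_def using Xm Ym by auto
  have Xi: "integrable D X" unfolding X_def using G_int[OF i] by auto
  have Yi: "integrable D Y" unfolding Y_def using G_int[OF i] by auto
  have Wi: "integrable D W" unfolding W_def using Xi Yi by auto
  have X2i: "integrable D (\<lambda>x. (norm (X x))\<^sup>2)" unfolding X_def using G_var_int[OF i] .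
  have Y2i: "integrable D (\<lambda>x. (norm (Y x))\<^sup>2)" unfolding Y_def using G_lip_int[OF i] .
  have W2b: "(norm (W x))\<^sup>2 \<le> 2*\<beta>\<^sup>2*(norm (X x))\<^sup>2 + 2*\<gamma>\<^sup>2*(norm (Y x))\<^sup>2" for x
    using sq_tri[of "\<beta> *\<^sub>R X x" "\<gamma> *\<^sub>R Y x"] unfolding W_def by (simp add: power_mult_distrib)
  have B2i: "integrable D (\<lambda>x. 2*\<beta>\<^sup>2*(norm (X x))\<^sup>2 + 2*\<gamma>\<^sup>2*(norm (Y x))\<^sup>2)"
    using X2i Y2i by auto
  have W2i: "integrable D (\<lambda>x. (norm (W x))\<^sup>2)"
    by (rule Bochner_Integration.integrable_bound[OF B2i]) (use Wm W2b in \<open>auto intro!: AE_I2\<close>)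
  have EX: "(\<integral>x. X x \<partial>D) = 0" unfolding X_def using G_int[OF i] G_unbiased[OF i] by (simp add: D.prob_space)
  have EY: "(\<integral>x. Y x \<partial>D) = \<Delta>" unfolding Y_def \<Delta>_def using G_int[OF i] G_unbiased[OF i] by (simp add: D.prob_space)
  have EW: "(\<integral>x. W x \<partial>D) = \<gamma> *\<^sub>R \<Delta>" unfolding W_def using Xi Yi EX EY by simp
  have sq: "(norm (Afun i wp wc u x))\<^sup>2 = (norm V)\<^sup>2 + 2 * (V \<bullet> W x) + (norm (W x))\<^sup>2" for x
    unfolding AVW by (rule norm_add_sq)
  have VWi: "integrable D (\<lambda>x. V \<bullet> W x)" using Wi by (intro integrable_inner_right) 
  show I: "integrable D (\<lambda>x. (norm (Afun i wp wc u x))\<^sup>2)"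
    unfolding sq using VWi W2i by auto
  have EA: "(\<integral>x. (norm (Afun i wp wc u x))\<^sup>2 \<partial>D) = (norm V)\<^sup>2 + 2 * (V \<bullet> (\<gamma> *\<^sub>R \<Delta>)) + (\<integral>x. (norm (W x))\<^sup>2 \<partial>D)"
    unfolding sq using VWi W2i Wi EW by (simp add: integral_inner_right D.prob_space)
  have EW2: "(\<integral>x. (norm (W x))\<^sup>2 \<partial>D) \<le> 2*\<beta>\<^sup>2*(\<sigma>\<^sup>2 / real B2) + 2*\<gamma>\<^sup>2*(Cg\<^sup>2 * (norm (wc - wp))\<^sup>2)"
  proof -
    have "(\<integral>x. (norm (W x))\<^sup>2 \<partial>D) \<le> (\<integral>x. 2*\<beta>\<^sup>2*(norm (X x))\<^sup>2 + 2*\<gamma>\<^sup>2*(norm (Y x))\<^sup>2 \<partial>D)"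
      using W2i B2i W2b by (rule integral_mono)
    also have "\<dots> = 2*\<beta>\<^sup>2*(\<integral>x. (norm (X x))\<^sup>2 \<partial>D) + 2*\<gamma>\<^sup>2*(\<integral>x. (norm (Y x))\<^sup>2 \<partial>D)"
      using X2i Y2i by simp
    also have "\<dots> \<le> 2*\<beta>\<^sup>2*(\<sigma>\<^sup>2 / real B2) + 2*\<gamma>\<^sup>2*(Cg\<^sup>2 * (norm (wc - wp))\<^sup>2)"
      using G_var[OF i, of wc] G_lip[OF i, of wc wp] unfolding X_def Y_def
      by (intro add_mono mult_left_mono) auto
    finally show ?thesis .
  qed
  define b where "b = u - g i wc"
  have dsplit: "u - g i wp = b + \<Delta>" unfolding b_def \<Delta>_def by simp
  have dd: "(norm (u - g i wp))\<^sup>2 = (norm b)\<^sup>2 + 2 * (b \<bullet> \<Delta>) + (norm \<Delta>)\<^sup>2"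
    unfolding dsplit by (rule norm_add_sq)
  have VV: "(norm V)\<^sup>2 = (1-\<beta>)^2 * (norm b)\<^sup>2" unfolding V_def b_def by (simp add: power_mult_distrib)
  have VD: "V \<bullet> (\<gamma> *\<^sub>R \<Delta>) = \<gamma> * (1-\<beta>) * (b \<bullet> \<Delta>)" unfolding V_def b_def by simp
  have DL: "(norm \<Delta>)\<^sup>2 \<le> Cg\<^sup>2 * (norm (wc - wp))\<^sup>2" unfolding \<Delta>_def by (rule g_bound[OF i])
  have p0: "0 \<le> real B1 / real m" by simp
  have alg': "real B1 / real m *((1-\<beta>)^2*(norm b)\<^sup>2 + 2*\<gamma>*(1-\<beta>)*(b \<bullet> \<Delta>) + 2*\<gamma>^2*(Cg\<^sup>2 * (norm (wc - wp))\<^sup>2))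
     + (1-real B1 / real m)*(norm b)\<^sup>2
         \<le> (1-real B1 / real m*\<beta>)*((norm b)\<^sup>2 + 2*(b \<bullet> \<Delta>) + (norm \<Delta>)\<^sup>2) + 8*(real m/real B1)*(Cg\<^sup>2 * (norm (wc - wp))\<^sup>2)"
  proof -
    have nn: "0 \<le> (norm b)\<^sup>2 + 2*(b \<bullet> \<Delta>) + (norm \<Delta>)\<^sup>2" using dd by (metis zero_le_power2)
    show ?thesis
      by (rule alg[OF beta0 beta1, of "real B1" "real m"]) (use nn B1 B1m DL in \<open>auto simp: \<gamma>_def msvr_gamma_def\<close>)
  qed
  have "real B1 / real m * (\<integral>x. (norm (Afun i wp wc u x))\<^sup>2 \<partial>D)
     \<le> real B1 / real m * ((1-\<beta>)^2*(norm b)\<^sup>2 + 2*\<gamma>*(1-\<beta>)*(b \<bullet> \<Delta>) + 2*\<gamma>^2*(Cg\<^sup>2 * (norm (wc - wp))\<^sup>2))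
       + real B1 / real m * (2*\<beta>\<^sup>2*(\<sigma>\<^sup>2 / real B2))"
  proof -
    have "(1-\<beta>)^2*(norm b)\<^sup>2 + 2*(\<gamma>*(1-\<beta>)*(b \<bullet> \<Delta>)) + (\<integral>x. (norm (W x))\<^sup>2 \<partial>D)
       \<le> ((1-\<beta>)^2*(norm b)\<^sup>2 + 2*\<gamma>*(1-\<beta>)*(b \<bullet> \<Delta>) + 2*\<gamma>^2*(Cg\<^sup>2 * (norm (wc - wp))\<^sup>2))
         + 2*\<beta>\<^sup>2*(\<sigma>\<^sup>2 / real B2)" using EW2 by linarith
    hence "real B1 / real m * ((1-\<beta>)^2*(norm b)\<^sup>2 + 2*(\<gamma>*(1-\<beta>)*(b \<bullet> \<Delta>)) + (\<integral>x. (norm (W x))\<^sup>2 \<partial>D))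
       \<le> real B1 / real m * (((1-\<beta>)^2*(norm b)\<^sup>2 + 2*\<gamma>*(1-\<beta>)*(b \<bullet> \<Delta>) + 2*\<gamma>^2*(Cg\<^sup>2 * (norm (wc - wp))\<^sup>2))
         + 2*\<beta>\<^sup>2*(\<sigma>\<^sup>2 / real B2))" using p0 by (rule mult_left_mono)
    thus ?thesis unfolding EA VV VD distrib_left by simp
  qed
  thus "real B1 / real m * (\<integral>x. (norm (Afun i wp wc u x))\<^sup>2 \<partial>D)
          + (1 - real B1 / real m) * (norm (u - g i wc))\<^sup>2
        \<le> (1 - real B1 * \<beta> / real m) * (norm (u - g i wp))\<^sup>2
          + 2 * real B1 / real m * \<beta>\<^sup>2 * \<sigma>\<^sup>2 / real B2
          + 8 * (real m / real B1) * Cg\<^sup>2 * (norm (wc - wp))\<^sup>2"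
    using alg' unfolding dd b_def[symmetric] by (simp add: algebra_simps)
qed


lemma tr_eq:
  "track_err m (msvr_update m B1 \<beta> G wp wc u S \<xi>) g wc
   = (\<Sum>i<m. if i \<in> S then (norm (Afun i wp wc (u i) (\<xi> i)))\<^sup>2 else (norm (u i - g i wc))\<^sup>2)"
  unfolding track_err_def msvr_update_def Afun_def msvr_gamma_def by (intro sum.cong) auto

lemma h_meas:
  assumes i: "i < m" and wp: "wp \<in> borel_measurable K" and wc: "wc \<in> borel_measurable K"
    and u: "u \<in> borel_measurable K" and S: "{k\<in>space K. i \<in> S k} \<in> sets K"
    and xi: "\<xi> \<in> K \<rightarrow>\<^sub>M D"
  shows "(\<lambda>k. if i \<in> S k then (norm (Afun i (wp k) (wc k) (u k) (\<xi> k)))\<^sup>2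
              else (norm (u k - g i (wc k)))\<^sup>2) \<in> borel_measurable K"
proof -
  have G1[measurable]: "(\<lambda>k. G i (wc k) (\<xi> k)) \<in> borel_measurable K" by (rule Gm[OF i wc xi])
  have G2[measurable]: "(\<lambda>k. G i (wp k) (\<xi> k)) \<in> borel_measurable K" by (rule Gm[OF i wp xi])
  have g1[measurable]: "(\<lambda>k. g i (wc k)) \<in> borel_measurable K" by (rule gm[OF i wc])
  note u[measurable]
  have A: "(\<lambda>k. (norm (Afun i (wp k) (wc k) (u k) (\<xi> k)))\<^sup>2) \<in> borel_measurable K"
    unfolding Afun_def by measurable
  have B: "(\<lambda>k. (norm (u k - g i (wc k)))\<^sup>2) \<in> borel_measurable K" by measurable
  show ?thesis by (rule measurable_If[OF A B S])
qed

lemma per_a: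
  fixes wp wc :: 'd and u :: "nat \<Rightarrow> 'p"
  shows "(\<integral>\<^sup>+y. ennreal (track_err m (msvr_update m B1 \<beta> G wp wc u (fst y) (snd y)) g wc)
            \<partial>(measure_pmf (uniform_subsets m B1) \<Otimes>\<^sub>M PiM {..<m} (\<lambda>_. D)))
         \<le> ennreal ((1 - real B1 * \<beta> / real m) * track_err m u g wp
                    + 2 * real B1 * \<beta>\<^sup>2 * \<sigma>\<^sup>2 / real B2
                    + 8 * (real m)\<^sup>2 * Cg\<^sup>2 / real B1 * (norm (wc - wp))\<^sup>2)"
proof -
  interpret D: prob_space D by (rule D)
  let ?P = "measure_pmf (uniform_subsets m B1)"
  let ?Q = "PiM {..<m} (\<lambda>_. D)"
  let ?A = "{S. S \<subseteq> {..<m} \<and> card S = B1}"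
  have Qp: "prob_space ?Q" by (rule prob_space_PiM) (rule D)
  interpret Q: prob_space ?Q by (rule Qp)
  have Qsf: "sigma_finite_measure ?Q" by (rule prob_space_imp_sigma_finite[OF Qp])
  have Afin: "finite ?A" by (rule finite_subset[of _ "Pow {..<m}"]) auto
  have Ane: "?A \<noteq> {}" using B1m by (metis card_eq_0_iff empty_iff n_subsets finite_lessThan card_lessThan binomial_eq_0_iff not_less)
  define h where "h i y = (if i \<in> fst y then (norm (Afun i wp wc (u i) (snd y i)))\<^sup>2 else (norm (u i - g i wc))\<^sup>2)" for i y
  define E where "E i = (\<integral>x. (norm (Afun i wp wc (u i) x))\<^sup>2 \<partial>D)" for i
  define c where "c i = (norm (u i - g i wc))\<^sup>2" for i
  define bd where "bd i = (1 - real B1 * \<beta> / real m) * (norm (u i - g i wp))\<^sup>2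
          + 2 * real B1 / real m * \<beta>\<^sup>2 * \<sigma>\<^sup>2 / real B2
          + 8 * (real m / real B1) * Cg\<^sup>2 * (norm (wc - wp))\<^sup>2" for i
  have tr: "track_err m (msvr_update m B1 \<beta> G wp wc u (fst y) (snd y)) g wc = (\<Sum>i<m. h i y)" for y
    unfolding tr_eq h_def by simp
  have hnn: "0 \<le> h i y" for i y unfolding h_def by auto
  have hm: "(\<lambda>y. h i y) \<in> borel_measurable (?P \<Otimes>\<^sub>M ?Q)" if i: "i < m" for i
  proof -
    have S: "{y\<in>space (?P \<Otimes>\<^sub>M ?Q). i \<in> fst y} \<in> sets (?P \<Otimes>\<^sub>M ?Q)"
    proof -
      have "{y\<in>space (?P \<Otimes>\<^sub>M ?Q). i \<in> fst y} = {S. i \<in> S} \<times> space ?Q"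
        by (auto simp: space_pair_measure)
      also have "\<dots> \<in> sets (?P \<Otimes>\<^sub>M ?Q)" by (rule pair_measureI) auto
      finally show ?thesis .
    qed
    have xi: "(\<lambda>y. snd y i) \<in> ?P \<Otimes>\<^sub>M ?Q \<rightarrow>\<^sub>M D"
      using measurable_compose[OF measurable_snd measurable_component_singleton[of i "{..<m}" "\<lambda>_. D"]] i
      by simp
    show ?thesis unfolding h_def
      by (rule h_meas[OF i _ _ _ S xi]) auto
  qed
  have inner: "(\<integral>\<^sup>+\<xi>. ennreal (h i (S, \<xi>)) \<partial>?Q) = ennreal (if i \<in> S then E i else c i)" if i: "i < m" for i S
  proof (cases "i \<in> S")
    case True
    have Am: "(\<lambda>x. ennreal ((norm (Afun i wp wc (u i) x))\<^sup>2)) \<in> borel_measurable D"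
    proof -
      have "(\<lambda>x. if i \<in> UNIV then (norm (Afun i wp wc (u i) x))\<^sup>2 else (norm (u i - g i wc))\<^sup>2) \<in> borel_measurable D"
        by (rule h_meas[OF i]) auto
      thus ?thesis by simp
    qed
    have "(\<integral>\<^sup>+\<xi>. ennreal (h i (S, \<xi>)) \<partial>?Q) = (\<integral>\<^sup>+\<xi>. ennreal ((norm (Afun i wp wc (u i) (\<xi> i)))\<^sup>2) \<partial>?Q)"
      unfolding h_def using True by simp
    also have "\<dots> = (\<integral>\<^sup>+x. ennreal ((norm (Afun i wp wc (u i) x))\<^sup>2) \<partial>(distr ?Q D (\<lambda>\<xi>. \<xi> i)))"
      by (rule nn_integral_distr[symmetric]) (use i Am in auto)
    also have "distr ?Q D (\<lambda>\<xi>. \<xi> i) = D"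
      by (rule distr_PiM_component) (use i D in auto)
    also have "(\<integral>\<^sup>+x. ennreal ((norm (Afun i wp wc (u i) x))\<^sup>2) \<partial>D) = ennreal (E i)"
      unfolding E_def by (rule nn_integral_eq_integral) (use per_i(1)[OF i] in auto)
    finally show ?thesis using True by simp
  next
    case False
    thus ?thesis unfolding h_def c_def by (simp add: Q.emeasure_space_1)
  qed
  have ii: "(\<integral>\<^sup>+y. ennreal (h i y) \<partial>(?P \<Otimes>\<^sub>M ?Q)) \<le> ennreal (bd i)" if i: "i < m" for i
  proof -
    have hm': "(\<lambda>y. ennreal (h i y)) \<in> borel_measurable (?P \<Otimes>\<^sub>M ?Q)" using hm[OF i] by measurable
    have "(\<integral>\<^sup>+y. ennreal (h i y) \<partial>(?P \<Otimes>\<^sub>M ?Q)) = (\<integral>\<^sup>+S. (\<integral>\<^sup>+\<xi>. ennreal (h i (S, \<xi>)) \<partial>?Q) \<partial>?P)"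
      by (rule sigma_finite_measure.nn_integral_fst[OF Qsf hm', symmetric])
    also have "\<dots> = (\<integral>\<^sup>+S. ennreal (if i \<in> S then E i else c i) \<partial>?P)"
      using inner[OF i] by simp
    also have "\<dots> = (\<Sum>S\<in>?A. ennreal (if i \<in> S then E i else c i)) / of_nat (card ?A)"
      unfolding uniform_subsets_def by (rule nn_integral_pmf_of_set[OF Ane Afin])
    also have "\<dots> = ennreal ((\<Sum>S\<in>?A. (if i \<in> S then E i else c i)) / real (card ?A))"
    proof -
      have E0: "0 \<le> E i" unfolding E_def by simp
      have "(\<Sum>S\<in>?A. ennreal (if i \<in> S then E i else c i)) = ennreal (\<Sum>S\<in>?A. (if i \<in> S then E i else c i))"
        by (rule sum_ennreal) (use E0 in \<open>auto simp: c_def\<close>)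
      moreover have "card ?A > 0" using Afin Ane by (simp add: card_gt_0_iff)
      moreover have "0 \<le> (\<Sum>S\<in>?A. (if i \<in> S then E i else c i))" by (rule sum_nonneg) (use E0 in \<open>auto simp: c_def\<close>)
      ultimately show ?thesis
        by (simp add: divide_ennreal ennreal_of_nat_eq_real_of_nat)
    qed
    also have "\<dots> = ennreal (real B1 / real m * E i + (1 - real B1 / real m) * c i)"
      using sum_if_subsets[OF i B1 B1m] by simp
    also have "\<dots> \<le> ennreal (bd i)"
      using per_i(2)[OF i, of wp wc "u i"] unfolding E_def c_def bd_def by (intro ennreal_leI) simp
    finally show ?thesis .
  qed
  have "(\<integral>\<^sup>+y. ennreal (track_err m (msvr_update m B1 \<beta> G wp wc u (fst y) (snd y)) g wc) \<partial>(?P \<Otimes>\<^sub>M ?Q))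
      = (\<integral>\<^sup>+y. (\<Sum>i<m. ennreal (h i y)) \<partial>(?P \<Otimes>\<^sub>M ?Q))"
    unfolding tr by (intro nn_integral_cong) (simp add: sum_ennreal hnn)
  also have "\<dots> = (\<Sum>i<m. (\<integral>\<^sup>+y. ennreal (h i y) \<partial>(?P \<Otimes>\<^sub>M ?Q)))"
    by (rule nn_integral_sum) (use hm in measurable)
  also have "\<dots> \<le> (\<Sum>i<m. ennreal (bd i))" by (rule sum_mono) (use ii in auto)
  also have "\<dots> = ennreal (\<Sum>i<m. bd i)"
  proof (rule sum_ennreal)
    fix i assume "i \<in> {..<m}"
    have "0 \<le> 1 - real B1 * \<beta> / real m"
    proof -
      have "real B1 * \<beta> \<le> real m * 1" using B1m beta1 beta0 by (intro mult_mono) auto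
      thus ?thesis using m1 by (simp add: field_simps)
    qed
    thus "0 \<le> bd i" unfolding bd_def by (intro add_nonneg_nonneg mult_nonneg_nonneg) auto
  qed
  also have "(\<Sum>i<m. bd i) = (1 - real B1 * \<beta> / real m) * track_err m u g wp
                    + 2 * real B1 * \<beta>\<^sup>2 * \<sigma>\<^sup>2 / real B2
                    + 8 * (real m)\<^sup>2 * Cg\<^sup>2 / real B1 * (norm (wc - wp))\<^sup>2"
  proof -
    have m0: "real m \<noteq> 0" using m1 by simp
    show ?thesis unfolding bd_def track_err_def
      using m0 by (simp add: sum.distrib sum_distrib_left power2_eq_square)
  qed
  finally show ?thesis .
qed

end

theorem lemma1:
  fixes M :: "'a measure" and D :: "'x measure"
    and G :: "nat \<Rightarrow> 'd::euclidean_space \<Rightarrow> 'x \<Rightarrow> 'p::euclidean_space"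
    and g :: "nat \<Rightarrow> 'd \<Rightarrow> 'p"
    and w_prev w_cur :: "'a \<Rightarrow> 'd" and u_prev :: "'a \<Rightarrow> nat \<Rightarrow> 'p"
    and m B1 B2 :: nat and \<sigma> Cg \<beta> :: real
  assumes "m \<ge> 1" and "1 \<le> B1" and "B1 \<le> m" and "B2 \<ge> 1"
    and "prob_space M" and "prob_space D"
    and G_meas: "\<And>i. i < m \<Longrightarrow> (\<lambda>(x, \<xi>). G i x \<xi>) \<in> borel_measurable (borel \<Otimes>\<^sub>M D)"
    and G_int: "\<And>i x. i < m \<Longrightarrow> integrable D (G i x)"
    and G_unbiased: "\<And>i x. i < m \<Longrightarrow> (\<integral>\<xi>. G i x \<xi> \<partial>D) = g i x"
    and G_var_int: "\<And>i x. i < m \<Longrightarrow> integrable D (\<lambda>\<xi>. (norm (G i x \<xi> - g i x))\<^sup>2)"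
    and G_var: "\<And>i x. i < m \<Longrightarrow> (\<integral>\<xi>. (norm (G i x \<xi> - g i x))\<^sup>2 \<partial>D) \<le> \<sigma>\<^sup>2 / real B2"
    and G_lip_int: "\<And>i x y. i < m \<Longrightarrow> integrable D (\<lambda>\<xi>. (norm (G i x \<xi> - G i y \<xi>))\<^sup>2)"
    and G_lip: "\<And>i x y. i < m \<Longrightarrow>
       (\<integral>\<xi>. (norm (G i x \<xi> - G i y \<xi>))\<^sup>2 \<partial>D) \<le> Cg\<^sup>2 * (norm (x - y))\<^sup>2"
    and g_lip: "\<And>i. i < m \<Longrightarrow> Cg-lipschitz_on UNIV (g i)"
    and w_prev_meas: "w_prev \<in> borel_measurable M"
    and w_cur_meas: "w_cur \<in> borel_measurable M"
    and u_prev_meas: "\<And>i. i < m \<Longrightarrow> (\<lambda>a. u_prev a i) \<in> borel_measurable M"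
    and err_int: "integrable M (\<lambda>a. track_err m (u_prev a) g (w_prev a))"
    and dw_int: "integrable M (\<lambda>a. (norm (w_cur a - w_prev a))\<^sup>2)"
    and "0 < \<beta>" and "\<beta> \<le> 1 / 2"
  shows "(\<integral>\<omega>. track_err m
              (msvr_update m B1 \<beta> G (w_prev (fst \<omega>)) (w_cur (fst \<omega>)) (u_prev (fst \<omega>))
                 (fst (snd \<omega>)) (snd (snd \<omega>)))
              g (w_cur (fst \<omega>))
          \<partial>(M \<Otimes>\<^sub>M (measure_pmf (uniform_subsets m B1) \<Otimes>\<^sub>M PiM {..<m} (\<lambda>_. D))))
     \<le> (1 - real B1 * \<beta> / real m) * (\<integral>a. track_err m (u_prev a) g (w_prev a) \<partial>M)
       + 2 * real B1 * \<beta>\<^sup>2 * \<sigma>\<^sup>2 / real B2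
       + 8 * (real m)\<^sup>2 * Cg\<^sup>2 / real B1 * (\<integral>a. (norm (w_cur a - w_prev a))\<^sup>2 \<partial>M)"
  proof -
  interpret S: msvr_setting D G g m B1 B2 \<sigma> Cg \<beta>
    by (rule msvr_setting.intro) (fact assms)+
  interpret M: prob_space M by fact
  interpret D: prob_space D by fact
  let ?P = "measure_pmf (uniform_subsets m B1)"
  let ?Q = "PiM {..<m} (\<lambda>_. D)"
  let ?N = "?P \<Otimes>\<^sub>M ?Q"
  define F where "F \<omega> = track_err m
              (msvr_update m B1 \<beta> G (w_prev (fst \<omega>)) (w_cur (fst \<omega>)) (u_prev (fst \<omega>))
                 (fst (snd \<omega>)) (snd (snd \<omega>)))
              g (w_cur (fst \<omega>))" for \<omega>
  define bnd where "bnd a = (1 - real B1 * \<beta> / real m) * track_err m (u_prev a) g (w_prev a)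
                    + 2 * real B1 * \<beta>\<^sup>2 * \<sigma>\<^sup>2 / real B2
                    + 8 * (real m)\<^sup>2 * Cg\<^sup>2 / real B1 * (norm (w_cur a - w_prev a))\<^sup>2" for a
  have Qp: "prob_space ?Q" by (rule prob_space_PiM) (rule assms(6))
  have Np: "prob_space ?N" by (rule prob_space_pair[OF prob_space_measure_pmf Qp])
  have Nsf: "sigma_finite_measure ?N" by (rule prob_space_imp_sigma_finite[OF Np])
  have coef: "0 \<le> 1 - real B1 * \<beta> / real m"
  proof -
    have "real B1 * \<beta> \<le> real m * 1" using assms by (intro mult_mono) auto
    thus ?thesis using assms by (simp add: field_simps)
  qed
  have Fnn: "0 \<le> F \<omega>" for \<omega> unfolding F_def track_err_def by (simp add: sum_nonneg)
  have Fm: "F \<in> borel_measurable (M \<Otimes>\<^sub>M ?N)"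
  proof -
    have eq: "F = (\<lambda>\<omega>. \<Sum>i<m. if i \<in> fst (snd \<omega>) then (norm (S.Afun i (w_prev (fst \<omega>)) (w_cur (fst \<omega>)) (u_prev (fst \<omega>) i) (snd (snd \<omega>) i)))\<^sup>2
          else (norm (u_prev (fst \<omega>) i - g i (w_cur (fst \<omega>))))\<^sup>2)"
      unfolding F_def by (intro ext S.tr_eq)
    show ?thesis unfolding eq
    proof (rule borel_measurable_sum)
      fix i assume "i \<in> {..<m}"
      hence i: "i < m" by simp
      have Sset: "{\<omega>\<in>space (M \<Otimes>\<^sub>M ?N). i \<in> fst (snd \<omega>)} \<in> sets (M \<Otimes>\<^sub>M ?N)"
      proof -
        have "{\<omega>\<in>space (M \<Otimes>\<^sub>M ?N). i \<in> fst (snd \<omega>)} = space M \<times> ({S. i \<in> S} \<times> space ?Q)"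
          by (auto simp: space_pair_measure)
        also have "\<dots> \<in> sets (M \<Otimes>\<^sub>M ?N)" by (intro pair_measureI) auto
        finally show ?thesis .
      qed
      have xi: "(\<lambda>\<omega>. snd (snd \<omega>) i) \<in> M \<Otimes>\<^sub>M ?N \<rightarrow>\<^sub>M D"
        using measurable_compose[OF measurable_compose[OF measurable_snd measurable_snd]
               measurable_component_singleton[of i "{..<m}" "\<lambda>_. D"]] i
        by simp
      have wp: "(\<lambda>\<omega>. w_prev (fst \<omega>)) \<in> borel_measurable (M \<Otimes>\<^sub>M ?N)"
        using measurable_compose[OF measurable_fst w_prev_meas] .
      have wc: "(\<lambda>\<omega>. w_cur (fst \<omega>)) \<in> borel_measurable (M \<Otimes>\<^sub>M ?N)"
        using measurable_compose[OF measurable_fst w_cur_meas] .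
      have u: "(\<lambda>\<omega>. u_prev (fst \<omega>) i) \<in> borel_measurable (M \<Otimes>\<^sub>M ?N)"
        using measurable_compose[OF measurable_fst u_prev_meas[OF i]] .
      show "(\<lambda>\<omega>. if i \<in> fst (snd \<omega>) then (norm (S.Afun i (w_prev (fst \<omega>)) (w_cur (fst \<omega>)) (u_prev (fst \<omega>) i) (snd (snd \<omega>) i)))\<^sup>2
          else (norm (u_prev (fst \<omega>) i - g i (w_cur (fst \<omega>))))\<^sup>2) \<in> borel_measurable (M \<Otimes>\<^sub>M ?N)"
        by (rule S.h_meas[OF i wp wc u Sset xi])
    qed
  qed
  have bnd_int: "integrable M bnd"
    unfolding bnd_def using err_int dw_int by auto
  have bnd_nn: "0 \<le> bnd a" for a
    unfolding bnd_def track_err_def using coef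
    by (intro add_nonneg_nonneg mult_nonneg_nonneg sum_nonneg) auto
  have "(\<integral>\<omega>. F \<omega> \<partial>(M \<Otimes>\<^sub>M ?N)) = enn2real (\<integral>\<^sup>+\<omega>. ennreal (F \<omega>) \<partial>(M \<Otimes>\<^sub>M ?N))"
    by (rule integral_eq_nn_integral[OF Fm]) (simp add: Fnn)
  also have "\<dots> \<le> integral\<^sup>L M bnd"
  proof (rule enn2real_leI)
    show "0 \<le> integral\<^sup>L M bnd" using bnd_nn by simp
    have Fm': "(\<lambda>\<omega>. ennreal (F \<omega>)) \<in> borel_measurable (M \<Otimes>\<^sub>M ?N)" using Fm by measurable
    have "(\<integral>\<^sup>+\<omega>. ennreal (F \<omega>) \<partial>(M \<Otimes>\<^sub>M ?N)) = (\<integral>\<^sup>+a. (\<integral>\<^sup>+y. ennreal (F (a, y)) \<partial>?N) \<partial>M)"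
      by (rule sigma_finite_measure.nn_integral_fst[OF Nsf Fm', symmetric])
    also have "\<dots> \<le> (\<integral>\<^sup>+a. ennreal (bnd a) \<partial>M)"
      by (rule nn_integral_mono) (simp only: F_def bnd_def fst_conv snd_conv S.per_a)
    also have "\<dots> = ennreal (integral\<^sup>L M bnd)"
      by (rule nn_integral_eq_integral[OF bnd_int]) (simp add: bnd_nn)
    finally show "(\<integral>\<^sup>+\<omega>. ennreal (F \<omega>) \<partial>(M \<Otimes>\<^sub>M ?N)) \<le> ennreal (integral\<^sup>L M bnd)" .
  qed
  also have "integral\<^sup>L M bnd = (1 - real B1 * \<beta> / real m) * (\<integral>a. track_err m (u_prev a) g (w_prev a) \<partial>M)
       + 2 * real B1 * \<beta>\<^sup>2 * \<sigma>\<^sup>2 / real B2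
       + 8 * (real m)\<^sup>2 * Cg\<^sup>2 / real B1 * (\<integral>a. (norm (w_cur a - w_prev a))\<^sup>2 \<partial>M)"
  proof -
    let ?c1 = "1 - real B1 * \<beta> / real m"
    let ?k = "2 * real B1 * \<beta>\<^sup>2 * \<sigma>\<^sup>2 / real B2"
    let ?c3 = "8 * (real m)\<^sup>2 * Cg\<^sup>2 / real B1"
    have "integral\<^sup>L M bnd = (\<integral>a. ?c1 * track_err m (u_prev a) g (w_prev a) + ?k \<partial>M)
         + (\<integral>a. ?c3 * (norm (w_cur a - w_prev a))\<^sup>2 \<partial>M)"
      unfolding bnd_def by (rule Bochner_Integration.integral_add) (use err_int dw_int in auto)
    also have "(\<integral>a. ?c1 * track_err m (u_prev a) g (w_prev a) + ?k \<partial>M)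
       = (\<integral>a. ?c1 * track_err m (u_prev a) g (w_prev a) \<partial>M) + (\<integral>a. ?k \<partial>M)"
      by (rule Bochner_Integration.integral_add) (use err_int in auto)
    also have "(\<integral>a. ?k \<partial>M) = ?k" using M.prob_space by simp
    also have "(\<integral>a. ?c1 * track_err m (u_prev a) g (w_prev a) \<partial>M) = ?c1 * (\<integral>a. track_err m (u_prev a) g (w_prev a) \<partial>M)"
      by (rule integral_mult_right_zero)
    also have "(\<integral>a. ?c3 * (norm (w_cur a - w_prev a))\<^sup>2 \<partial>M) = ?c3 * (\<integral>a. (norm (w_cur a - w_prev a))\<^sup>2 \<partial>M)"
      by (rule integral_mult_right_zero)
    finally show ?thesis .
  qed
  finally show ?thesis unfolding F_def .
qed

end
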